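(* Let $\underline x\in[0,1]^n$, and let $c_1,c_2$ be two parity checks (binary vectors of length $n$) with neighborhoods $N_1,N_2\subseteq\{1,\dots,n\}$ such that all parity-check constraints of $c_1$ and of $c_2$ are satisfied by $\underline x$. Let $c=c_1\oplus c_2$ be their modulo-2 sum, whose neighborhood is $N=(N_1\cup N_2)\setminus(N_1\cap N_2)$. If $c$ generates a cut at $\underline x$ (i.e. some parity-check constraint of $c$ is violated at $\underline x$), then $N_1\cap N_2$ contains at least two indices $i$ with $0<x_i<1$.
   Context: The neighborhood of a parity check $c\in\{0,1\}^n$ is $\{i: c_i=1\}$. The parity-check constraints of a check with neighborhood $N$ are $\sum_{i\in V}x_i-\sum_{i\in N\setminus V}x_i\le |V|-1$ for all odd-sized $V\subseteq N$. A check generates a cut at $\underline x$ if one of its parity-check constraints is violated at $\underline x$. *)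

theory Defs
  imports Complex_Main
begin

text \<open>Indices are 0..n-1. A parity check is a binary vector of length n, represented
  as a function c :: nat => bool (True = 1), only entries below n being relevant.\<close>

definition nbhd :: "nat \<Rightarrow> (nat \<Rightarrow> bool) \<Rightarrow> nat set" where
  "nbhd n c = {i. i < n \<and> c i}"

definition xor_check :: "(nat \<Rightarrow> bool) \<Rightarrow> (nat \<Rightarrow> bool) \<Rightarrow> (nat \<Rightarrow> bool)" where
  "xor_check c1 c2 = (\<lambda>i. c1 i \<noteq> c2 i)"

definition pc_constraint_holds :: "nat set \<Rightarrow> nat set \<Rightarrow> (nat \<Rightarrow> real) \<Rightarrow> bool" where
  "pc_constraint_holds N V x \<longleftrightarrow>
     (\<Sum>i\<in>V. x i) - (\<Sum>i\<in>N - V. x i) \<le> real (card V) - 1"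

definition satisfies_all_pc :: "nat \<Rightarrow> (nat \<Rightarrow> bool) \<Rightarrow> (nat \<Rightarrow> real) \<Rightarrow> bool" where
  "satisfies_all_pc n c x \<longleftrightarrow>
     (\<forall>V. V \<subseteq> nbhd n c \<and> odd (card V) \<longrightarrow> pc_constraint_holds (nbhd n c) V x)"

definition generates_cut :: "nat \<Rightarrow> (nat \<Rightarrow> bool) \<Rightarrow> (nat \<Rightarrow> real) \<Rightarrow> bool" where
  "generates_cut n c x \<longleftrightarrow>
     (\<exists>V. V \<subseteq> nbhd n c \<and> odd (card V) \<and> \<not> pc_constraint_holds (nbhd n c) V x)"

end

theory Submission
  imports Defs
begin

definition tt :: "(nat \<Rightarrow> real) \<Rightarrow> nat set \<Rightarrow> nat set \<Rightarrow> nat \<Rightarrow> real" where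
  "tt x N V i = (if i \<in> V then 1 - x i else if i \<in> N then x i else 0)"

lemma pc_iff:
  assumes "V \<subseteq> N" "N \<subseteq> {..<n}"
  shows "pc_constraint_holds N V x \<longleftrightarrow> 1 \<le> (\<Sum>i<n. tt x N V i)"
proof -
  have fN: "finite N" using assms finite_subset by blast
  have fV: "finite V" using assms fN finite_subset by blast
  have "(\<Sum>i<n. tt x N V i) = (\<Sum>i\<in>N. tt x N V i)"
    by (rule sum.mono_neutral_right) (use assms in \<open>auto simp: tt_def\<close>)
  also have "\<dots> = (\<Sum>i\<in>V. tt x N V i) + (\<Sum>i\<in>N - V. tt x N V i)"
    using sum.subset_diff[OF assms(1) fN] by (simp add: add.commute)
  also have "(\<Sum>i\<in>V. tt x N V i) = (\<Sum>i\<in>V. 1 - x i)"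
    by (rule sum.cong) (auto simp: tt_def)
  also have "(\<Sum>i\<in>N - V. tt x N V i) = (\<Sum>i\<in>N - V. x i)"
    by (rule sum.cong) (auto simp: tt_def)
  finally have "(\<Sum>i<n. tt x N V i) = real (card V) - (\<Sum>i\<in>V. x i) + (\<Sum>i\<in>N - V. x i)"
    by (simp add: sum_subtractf)
  then show ?thesis unfolding pc_constraint_holds_def by linarith
qed

theorem lemma2:
  fixes n :: nat and x :: "nat \<Rightarrow> real" and c1 c2 :: "nat \<Rightarrow> bool"
  assumes "\<forall>i<n. 0 \<le> x i \<and> x i \<le> 1"
    and "satisfies_all_pc n c1 x"
    and "satisfies_all_pc n c2 x"
    and "generates_cut n (xor_check c1 c2) x"
  shows "2 \<le> card {i \<in> nbhd n c1 \<inter> nbhd n c2. 0 < x i \<and> x i < 1}"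
proof (rule ccontr)
  assume nc: "\<not> ?thesis"
  define N1 where "N1 = nbhd n c1"
  define N2 where "N2 = nbhd n c2"
  define A where "A = N1 \<inter> N2"
  define N where "N = nbhd n (xor_check c1 c2)"
  have N1n: "N1 \<subseteq> {..<n}" and N2n: "N2 \<subseteq> {..<n}" and Nn: "N \<subseteq> {..<n}"
    by (auto simp: N1_def N2_def N_def nbhd_def)
  have Neq: "N = (N1 \<union> N2) - A"
    by (auto simp: N1_def N2_def N_def A_def nbhd_def xor_check_def)
  have fA: "finite A" using N1n A_def finite_subset by blast
  have s1: "\<And>V. V \<subseteq> N1 \<Longrightarrow> odd (card V) \<Longrightarrow> 1 \<le> (\<Sum>i<n. tt x N1 V i)"
    using assms(2) pc_iff[OF _ N1n] unfolding satisfies_all_pc_def N1_def by blast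
  have s2: "\<And>V. V \<subseteq> N2 \<Longrightarrow> odd (card V) \<Longrightarrow> 1 \<le> (\<Sum>i<n. tt x N2 V i)"
    using assms(3) pc_iff[OF _ N2n] unfolding satisfies_all_pc_def N2_def by blast
  obtain V where VN: "V \<subseteq> N" and Vodd: "odd (card V)" and Vlt: "(\<Sum>i<n. tt x N V i) < 1"
    using assms(4) pc_iff[OF _ Nn] unfolding generates_cut_def N_def by force
  define V1 where "V1 = V \<inter> N1"
  define V2 where "V2 = V \<inter> N2"
  have fV: "finite V" using finite_subset[OF subset_trans[OF VN Nn] finite_lessThan] .
  have Vsplit: "V = V1 \<union> V2" "V1 \<inter> V2 = {}" using VN unfolding Neq V1_def V2_def A_def by blast+
  have fV1: "finite V1" "finite V2" using fV by (simp_all add: V1_def V2_def)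
  have cV: "card V = card V1 + card V2"
    using card_Un_disjoint[OF fV1 Vsplit(2)] Vsplit(1) by simp
  have x01: "\<And>i. i < n \<Longrightarrow> 0 \<le> x i \<and> x i \<le> 1" using assms(1) by blast
  show False
  proof (cases "A = {}")
    case True
    have pt: "\<And>i. i < n \<Longrightarrow> tt x N V i = tt x N1 V1 i + tt x N2 V2 i"
      using True VN Neq by (auto simp: tt_def V1_def V2_def A_def)
    have pos: "\<And>M W i. i < n \<Longrightarrow> 0 \<le> tt x M W i"
      using x01 by (auto simp: tt_def)
    have eq: "(\<Sum>i<n. tt x N V i) = (\<Sum>i<n. tt x N1 V1 i) + (\<Sum>i<n. tt x N2 V2 i)"
      by (simp add: pt sum.distrib)
    have g1: "0 \<le> (\<Sum>i<n. tt x N1 V1 i)" "0 \<le> (\<Sum>i<n. tt x N2 V2 i)"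
      using pos by (auto intro: sum_nonneg)
    show False
    proof (cases "odd (card V1)")
      case True
      then have "1 \<le> (\<Sum>i<n. tt x N1 V1 i)" using s1 by (auto simp: V1_def)
      then show False using eq g1 Vlt by linarith
    next
      case False
      then have "odd (card V2)" using cV Vodd by auto
      then have "1 \<le> (\<Sum>i<n. tt x N2 V2 i)" using s2 by (auto simp: V2_def)
      then show False using eq g1 Vlt by linarith
    qed
  next
    case False
    define Fr where "Fr = {i \<in> A. 0 < x i \<and> x i < 1}"
    have cFr: "card Fr < 2" using nc by (simp add: Fr_def A_def N1_def N2_def)
    have fFr: "finite Fr" using fA Fr_def by simp
    obtain j where jA: "j \<in> A" and jint: "\<And>i. i \<in> A \<Longrightarrow> i \<noteq> j \<Longrightarrow> x i = 0 \<or> x i = 1"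
    proof (cases "Fr = {}")
      case True
      obtain j where "j \<in> A" using False by blast
      moreover have "\<And>i. i \<in> A \<Longrightarrow> x i = 0 \<or> x i = 1"
      proof -
        fix i assume iA: "i \<in> A"
        then have "i < n" using N1n A_def by auto
        then show "x i = 0 \<or> x i = 1" using x01[of i] True iA Fr_def by force
      qed
      ultimately show ?thesis using that by blast
    next
      case nF: False
      then obtain j where jF: "j \<in> Fr" by blast
      have "Fr = {j}"
      proof -
        have "card Fr = 1" using cFr nF fFr by (metis One_nat_def card_0_eq less_2_cases)
        then show ?thesis using jF by (metis card_1_singletonE singletonD)
      qed
      moreover have "\<And>i. i \<in> A \<Longrightarrow> i \<noteq> j \<Longrightarrow> x i = 0 \<or> x i = 1"
      proof -
        fix i assume iA: "i \<in> A" "i \<noteq> j"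
        then have "i < n" using N1n A_def by auto
        then show "x i = 0 \<or> x i = 1" using x01[of i] iA Fr_def \<open>Fr = {j}\<close> by force
      qed
      ultimately show ?thesis using that jF Fr_def by blast
    qed
    define Sa where "Sa = {i \<in> A - {j}. x i = 1}"
    define Sb where "Sb = insert j Sa"
    have fSa: "finite Sa" using fA Sa_def by simp
    have cSb: "card Sb = card Sa + 1" using fSa by (simp add: Sb_def Sa_def)
    have VA: "V \<inter> A = {}" using VN Neq by auto
    have key: "\<And>S S'. {S, S'} = {Sa, Sb} \<Longrightarrow> odd (card (V1 \<union> S)) \<Longrightarrow> odd (card (V2 \<union> S')) \<Longrightarrow> False"
    proof -
      fix S S' assume SS: "{S, S'} = {Sa, Sb}" and o1: "odd (card (V1 \<union> S))" and o2: "odd (card (V2 \<union> S'))"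
      have SA: "S \<subseteq> A" "S' \<subseteq> A" using SS jA by (auto simp: Sa_def Sb_def doubleton_eq_iff)
      have pt: "tt x N1 (V1 \<union> S) i + tt x N2 (V2 \<union> S') i = tt x N V i + (if i = j then 1 else 0)"
        if "i < n" for i
      proof -
        have c: "(S = Sa \<and> S' = Sb) \<or> (S = Sb \<and> S' = Sa)" using SS by (auto simp: doubleton_eq_iff)
        show ?thesis
        proof (cases "i \<in> A")
          case True
          then have iV: "i \<notin> V" "i \<notin> N" "i \<notin> V1" "i \<notin> V2" using VA Neq V1_def V2_def by auto
          show ?thesis
          proof (cases "i = j")
            case True
            then show ?thesis using c iV \<open>i \<in> A\<close> by (auto simp: tt_def Sa_def Sb_def A_def)
          next
            case ij: False
            then have "x i = 0 \<or> x i = 1" using jint True by blast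
            then show ?thesis using c iV True ij by (auto simp: tt_def Sa_def Sb_def A_def)
          qed
        next
          case nA: False
          then have "i \<notin> S" "i \<notin> S'" "i \<noteq> j" using SA jA by auto
          then show ?thesis using nA Neq VN by (auto simp: tt_def V1_def V2_def A_def)
        qed
      qed
      have jn: "j < n" using jA A_def N1n by auto
      have "(\<Sum>i<n. tt x N1 (V1 \<union> S) i) + (\<Sum>i<n. tt x N2 (V2 \<union> S') i)
           = (\<Sum>i<n. tt x N1 (V1 \<union> S) i + tt x N2 (V2 \<union> S') i)"
        by (rule sum.distrib[symmetric])
      also have "\<dots> = (\<Sum>i<n. tt x N V i + (if i = j then 1 else 0))"
        by (rule sum.cong) (simp_all add: pt)
      also have "\<dots> = (\<Sum>i<n. tt x N V i) + (\<Sum>i<n. (if i = j then 1 else 0::real))"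
        by (rule sum.distrib)
      also have "(\<Sum>i<n. (if i = j then 1 else 0::real)) = 1" using jn by simp
      finally have eq: "(\<Sum>i<n. tt x N1 (V1 \<union> S) i) + (\<Sum>i<n. tt x N2 (V2 \<union> S') i) = (\<Sum>i<n. tt x N V i) + 1" .
      have "V1 \<union> S \<subseteq> N1" "V2 \<union> S' \<subseteq> N2" using SA by (auto simp: V1_def V2_def A_def)
      then have "1 \<le> (\<Sum>i<n. tt x N1 (V1 \<union> S) i)" "1 \<le> (\<Sum>i<n. tt x N2 (V2 \<union> S') i)"
        using s1 s2 o1 o2 by auto
      then show False using eq Vlt by linarith
    qed
    have d1: "V1 \<inter> Sa = {}" "V2 \<inter> Sa = {}" "V1 \<inter> Sb = {}" "V2 \<inter> Sb = {}"
      using VA jA Vsplit by (auto simp: Sa_def Sb_def)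
    have fSb: "finite Sb" using fSa Sb_def by simp
    have cards: "card (V1 \<union> Sa) = card V1 + card Sa" "card (V2 \<union> Sa) = card V2 + card Sa"
       "card (V1 \<union> Sb) = card V1 + card Sb" "card (V2 \<union> Sb) = card V2 + card Sb"
      using d1 fV1 fSa fSb by (simp_all add: card_Un_disjoint)
    show False
    proof (cases "odd (card V1 + card Sa)")
      case True
      then have "odd (card V2 + card Sb)" using cV Vodd cSb by auto
      then show False using key[of Sa Sb] True cards by auto
    next
      case f: False
      then have "odd (card V1 + card Sb)" "odd (card V2 + card Sa)" using cV Vodd cSb by auto
      then show False using key[of Sb Sa] cards by (auto simp: insert_commute)
    qed
  qed
qed

end
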